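(* If $D$ is a quaternary near-extremal Hermitian self-dual code of length $30$ and $\alpha$ denotes the number of codewords of weight $10$ in $D$, then $\alpha=9\beta$ for some integer $\beta$ with $1\le\beta\le 1319$.
   Context: Let $\mathbb{F}_4=\{0,1,\omega,\omega^2\}$ with $\omega^2=\omega+1$. A quaternary code of length $n$ is a linear subspace of $\mathbb{F}_4^n$; it is Hermitian self-dual if it equals its dual with respect to $\langle x,y\rangle_H=\sum_k x_k y_k^2$. The weight of a vector is the number of nonzero coordinates. A quaternary Hermitian self-dual code of length $30$ is near-extremal if its minimum nonzero weight is $10$. *)

theory Defs
  imports Main
begin

text \<open>The field F4 = {0, 1, w, w^2} with w^2 = w + 1 (characteristic 2).\<close>
datatype gf4 = G0 | G1 | GW | GW2

fun gf4_add :: "gf4 \<Rightarrow> gf4 \<Rightarrow> gf4" where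
  "gf4_add G0 y = y"
| "gf4_add x G0 = x"
| "gf4_add G1 G1 = G0" | "gf4_add G1 GW = GW2" | "gf4_add G1 GW2 = GW"
| "gf4_add GW G1 = GW2" | "gf4_add GW GW = G0" | "gf4_add GW GW2 = G1"
| "gf4_add GW2 G1 = GW" | "gf4_add GW2 GW = G1" | "gf4_add GW2 GW2 = G0"

fun gf4_mul :: "gf4 \<Rightarrow> gf4 \<Rightarrow> gf4" where
  "gf4_mul G0 y = G0"
| "gf4_mul x G0 = G0"
| "gf4_mul G1 y = y"
| "gf4_mul x G1 = x"
| "gf4_mul GW GW = GW2" | "gf4_mul GW GW2 = G1"
| "gf4_mul GW2 GW = G1" | "gf4_mul GW2 GW2 = GW"

definition vecs :: "nat \<Rightarrow> (nat \<Rightarrow> gf4) set" where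
  "vecs n = {x. \<forall>k\<ge>n. x k = G0}"

definition vadd :: "(nat \<Rightarrow> gf4) \<Rightarrow> (nat \<Rightarrow> gf4) \<Rightarrow> nat \<Rightarrow> gf4" where
  "vadd x y = (\<lambda>k. gf4_add (x k) (y k))"

definition smul :: "gf4 \<Rightarrow> (nat \<Rightarrow> gf4) \<Rightarrow> nat \<Rightarrow> gf4" where
  "smul a x = (\<lambda>k. gf4_mul a (x k))"

definition linear_code :: "nat \<Rightarrow> (nat \<Rightarrow> gf4) set \<Rightarrow> bool" where
  "linear_code n C \<longleftrightarrow> C \<subseteq> vecs n \<and> (\<lambda>k. G0) \<in> C
     \<and> (\<forall>x\<in>C. \<forall>y\<in>C. vadd x y \<in> C) \<and> (\<forall>a. \<forall>x\<in>C. smul a x \<in> C)"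

definition herm :: "nat \<Rightarrow> (nat \<Rightarrow> gf4) \<Rightarrow> (nat \<Rightarrow> gf4) \<Rightarrow> gf4" where
  "herm n x y = foldr gf4_add (map (\<lambda>k. gf4_mul (x k) (gf4_mul (y k) (y k))) [0..<n]) G0"

definition herm_dual :: "nat \<Rightarrow> (nat \<Rightarrow> gf4) set \<Rightarrow> (nat \<Rightarrow> gf4) set" where
  "herm_dual n C = {y \<in> vecs n. \<forall>x\<in>C. herm n x y = G0}"

definition herm_self_dual :: "nat \<Rightarrow> (nat \<Rightarrow> gf4) set \<Rightarrow> bool" where
  "herm_self_dual n C \<longleftrightarrow> linear_code n C \<and> herm_dual n C = C"

definition wt :: "nat \<Rightarrow> (nat \<Rightarrow> gf4) \<Rightarrow> nat" where
  "wt n x = card {k. k < n \<and> x k \<noteq> G0}"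

definition min_weight :: "nat \<Rightarrow> (nat \<Rightarrow> gf4) set \<Rightarrow> nat" where
  "min_weight n C = (LEAST w. \<exists>x\<in>C. x \<noteq> (\<lambda>k. G0) \<and> wt n x = w)"

definition near_extremal_30 :: "(nat \<Rightarrow> gf4) set \<Rightarrow> bool" where
  "near_extremal_30 D \<longleftrightarrow> herm_self_dual 30 D \<and> min_weight 30 D = 10"

end

theory Submission
  imports Defs "HOL-Library.FuncSet"
begin

instantiation gf4 :: comm_ring_1
begin
definition "zero_gf4 = G0"
definition "one_gf4 = G1"
definition "plus_gf4 = gf4_add"
definition "times_gf4 = gf4_mul"
definition "uminus_gf4 = (\<lambda>x::gf4. x)"
definition "minus_gf4 = gf4_add"
instance
proof
  fix a b c :: gf4
  show "a * b * c = a * (b * c)" unfolding times_gf4_def by (cases a; cases b; cases c; simp)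
  show "a * b = b * a" unfolding times_gf4_def by (cases a; cases b; simp)
  show "1 * a = a" unfolding times_gf4_def one_gf4_def by (cases a; simp)
  show "a + b + c = a + (b + c)" unfolding plus_gf4_def by (cases a; cases b; cases c; simp)
  show "a + b = b + a" unfolding plus_gf4_def by (cases a; cases b; simp)
  show "0 + a = a" unfolding plus_gf4_def zero_gf4_def by (cases a; simp)
  show "- a + a = 0" unfolding plus_gf4_def zero_gf4_def uminus_gf4_def by (cases a; simp)
  show "a - b = a + - b" unfolding plus_gf4_def minus_gf4_def uminus_gf4_def by (cases a; cases b; simp)
  show "(a + b) * c = a * c + b * c" unfolding plus_gf4_def times_gf4_def by (cases a; cases b; cases c; simp)
  show "(0::gf4) \<noteq> 1" unfolding zero_gf4_def one_gf4_def by simp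
qed
end

lemmas gf4_defs = zero_gf4_def one_gf4_def plus_gf4_def times_gf4_def

lemma gf4_UNIV: "(UNIV::gf4 set) = {G0,G1,GW,GW2}"
proof -
  have "x \<in> {G0,G1,GW,GW2}" for x by (cases x) auto
  then show ?thesis by auto
qed

lemma card_gf4: "card (UNIV::gf4 set) = 4" by (simp add: gf4_UNIV)

lemma char2[simp]: "(a::gf4) + a = 0" by (cases a) (simp_all add: gf4_defs)
lemma frob: "((a::gf4) + b) * (a + b) = a * a + b * b" by (cases a; cases b; simp add: gf4_defs)
lemma cube: "(a::gf4) * (a * a) = (if a = 0 then 0 else 1)" by (cases a; simp add: gf4_defs)
lemma mult_eq0: "(a::gf4) \<noteq> 0 \<Longrightarrow> (a * b = 0) = (b = 0)" by (cases a; cases b; simp add: gf4_defs)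
lemma of_nat_gf4: "(of_nat m :: gf4) = (if even m then 0 else 1)"
  by (induction m) simp_all

definition chi :: "gf4 \<Rightarrow> int" where "chi a = (if a = G0 \<or> a = G1 then 1 else -1)"
lemma chi0[simp]: "chi 0 = 1" by (simp add: chi_def zero_gf4_def)
lemma chi_add: "chi (a + b) = chi a * chi b" by (cases a; cases b; simp add: chi_def gf4_defs)

lemma chi_neg1: assumes "(a::gf4) \<noteq> 0" shows "\<exists>c. chi (c * a) = -1"
proof (cases a)
  case G0 then show ?thesis using assms by (simp add: zero_gf4_def)
next
  case G1 then show ?thesis by (intro exI[of _ GW]) (simp add: chi_def times_gf4_def)
next
  case GW then show ?thesis by (intro exI[of _ G1]) (simp add: chi_def times_gf4_def)
next
  case GW2 then show ?thesis by (intro exI[of _ G1]) (simp add: chi_def times_gf4_def)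
qed

lemma chi_neg2: assumes "(a::gf4) \<noteq> 0" shows "\<exists>c. chi (a * (c * c)) = -1"
proof (cases a)
  case G0 then show ?thesis using assms by (simp add: zero_gf4_def)
next
  case G1 then show ?thesis by (intro exI[of _ GW]) (simp add: chi_def times_gf4_def)
next
  case GW then show ?thesis by (intro exI[of _ G1]) (simp add: chi_def times_gf4_def)
next
  case GW2 then show ?thesis by (intro exI[of _ G1]) (simp add: chi_def times_gf4_def)
qed

lemma vadd_apply[simp]: "vadd x y k = x k + y k" by (simp add: vadd_def plus_gf4_def)
lemma smul_apply[simp]: "smul a x k = a * x k" by (simp add: smul_def times_gf4_def)

lemma herm_sum: "herm n x y = (\<Sum>k<n. x k * (y k * y k))"
proof -
  have e: "gf4_add = (+)" "gf4_mul = (*)" "G0 = 0" by (simp_all add: fun_eq_iff gf4_defs)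
  have "herm n x y = sum_list (map (\<lambda>k. x k * (y k * y k)) [0..<n])"
    unfolding herm_def e by (simp add: sum_list.eq_foldr)
  also have "\<dots> = (\<Sum>k<n. x k * (y k * y k))"
    by (simp add: interv_sum_list_conv_sum_set_nat lessThan_atLeast0)
  finally show ?thesis .
qed

lemma herm_add_left: "herm n (vadd x x') y = herm n x y + herm n x' y"
  by (simp add: herm_sum distrib_right sum.distrib)
lemma herm_smul_left: "herm n (smul a x) y = a * herm n x y"
  by (simp add: herm_sum sum_distrib_left mult.assoc)
lemma herm_add_right: "herm n x (vadd y y') = herm n x y + herm n x y'"
  unfolding herm_sum vadd_apply frob by (simp add: distrib_left sum.distrib)

definition supp_in :: "nat set \<Rightarrow> (nat \<Rightarrow> gf4) set" where
  "supp_in T = {y. \<forall>k. k \<notin> T \<longrightarrow> y k = 0}"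

lemma vecs_supp: "vecs n = supp_in {..<n}"
  by (auto simp: vecs_def supp_in_def zero_gf4_def)

lemma supp_in_card:
  assumes "finite T" shows "finite (supp_in T) \<and> card (supp_in T) = 4 ^ card T"
proof -
  have bij: "bij_betw (\<lambda>y. restrict y T) (supp_in T) (PiE T (\<lambda>_. UNIV))"
  proof (rule bij_betwI[where g="\<lambda>h k. if k \<in> T then h k else 0"])
    show "(\<lambda>y. restrict y T) \<in> supp_in T \<rightarrow> PiE T (\<lambda>_. UNIV)" by auto
    show "(\<lambda>h k. if k \<in> T then h k else 0) \<in> PiE T (\<lambda>_. UNIV) \<rightarrow> supp_in T"
      by (auto simp: supp_in_def)
    show "\<And>y. y \<in> supp_in T \<Longrightarrow> (\<lambda>k. if k \<in> T then restrict y T k else 0) = y"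
      by (auto simp: supp_in_def fun_eq_iff)
    show "\<And>h. h \<in> PiE T (\<lambda>_. UNIV) \<Longrightarrow> restrict (\<lambda>k. if k \<in> T then h k else 0) T = h"
      by (auto simp: fun_eq_iff PiE_def extensional_def)
  qed
  have f: "finite (PiE T (\<lambda>_. UNIV::gf4 set))" by (rule finite_PiE) (simp_all add: assms gf4_UNIV)
  have c: "card (PiE T (\<lambda>_. UNIV::gf4 set)) = 4 ^ card T" by (simp add: card_PiE assms card_gf4)
  show ?thesis using bij f c bij_betw_finite bij_betw_same_card by metis
qed

lemma char_sum_zero:
  fixes C :: "(nat \<Rightarrow> gf4) set" and f :: "(nat \<Rightarrow> gf4) \<Rightarrow> gf4"
  assumes fin: "finite C" and cl: "\<And>x. x \<in> C \<Longrightarrow> vadd x z \<in> C"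
    and lin: "\<And>x. x \<in> C \<Longrightarrow> f (vadd x z) = f x + f z" and neg: "chi (f z) = -1"
  shows "(\<Sum>x\<in>C. chi (f x)) = 0"
proof -
  have vv: "\<And>x. vadd (vadd x z) z = x" by (simp add: fun_eq_iff add.assoc)
  have bij: "bij_betw (\<lambda>x. vadd x z) C C"
    by (rule bij_betwI[where g="\<lambda>x. vadd x z"]) (use cl vv in auto)
  have "(\<Sum>x\<in>C. chi (f x)) = (\<Sum>x\<in>C. chi (f (vadd x z)))"
    using sum.reindex_bij_betw[OF bij, of "\<lambda>x. chi (f x)"] by simp
  also have "\<dots> = (\<Sum>x\<in>C. chi (f x) * chi (f z))"
    by (rule sum.cong) (simp_all add: lin chi_add)
  also have "\<dots> = - (\<Sum>x\<in>C. chi (f x))" by (simp add: neg sum_negf)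
  finally show ?thesis by simp
qed

lemma sum_if_const: fixes c :: "'a::comm_semiring_1" shows "finite A \<Longrightarrow> (\<Sum>x\<in>A. if P x then c else 0) = c * of_nat (card {x\<in>A. P x})"
  by (simp add: sum.inter_filter[symmetric] mult.commute)

lemma double_count:
  assumes "finite D" "finite P"
  shows "(\<Sum>U\<in>P. card {x\<in>D. R x U}) = (\<Sum>x\<in>D. card {U\<in>P. R x U})"
proof -
  have "(\<Sum>U\<in>P. card {x\<in>D. R x U}) = (\<Sum>U\<in>P. \<Sum>x\<in>D. if R x U then 1 else 0)"
    using assms by (simp add: sum_if_const)
  also have "\<dots> = (\<Sum>x\<in>D. \<Sum>U\<in>P. if R x U then 1 else 0)" by (rule sum.swap)
  also have "\<dots> = (\<Sum>x\<in>D. card {U\<in>P. R x U})"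
    using assms by (simp add: sum_if_const)
  finally show ?thesis .
qed

lemma C1:
  assumes "S \<subseteq> {..<30}" "u \<le> 29"
  shows "card {U. (U \<subseteq> {Suc 0..<30} \<and> card U = u) \<and> S \<subseteq> U}
         = (if 0 \<in> S then 0 else (29 - card S) choose (29 - u))"
proof (cases "0 \<in> S")
  case True
  then have "{U. (U \<subseteq> {Suc 0..<30} \<and> card U = u) \<and> S \<subseteq> U} = {}" by auto
  then show ?thesis using True by simp
next
  case False
  define A where "A = {Suc 0..<30}"
  have SA: "S \<subseteq> A" using assms False A_def by (auto simp: subset_iff) (metis Suc_leI gr0I)
  have fA: "finite A" and cA: "card A = 29" by (simp_all add: A_def)
  have fS: "finite S" using SA fA finite_subset by blast
  have bij: "bij_betw (\<lambda>U. A - U) {U. (U \<subseteq> A \<and> card U = u) \<and> S \<subseteq> U}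
              {V. V \<subseteq> A - S \<and> card V = 29 - u}"
  proof (rule bij_betwI[where g="\<lambda>U. A - U"])
    show "(\<lambda>U. A - U) \<in> {U. (U \<subseteq> A \<and> card U = u) \<and> S \<subseteq> U} \<rightarrow> {V. V \<subseteq> A - S \<and> card V = 29 - u}"
    proof
      fix U assume "U \<in> {U. (U \<subseteq> A \<and> card U = u) \<and> S \<subseteq> U}"
      then have "U \<subseteq> A" "card U = u" "S \<subseteq> U" by auto
      moreover have "finite U" using \<open>U \<subseteq> A\<close> fA finite_subset by blast
      ultimately show "A - U \<in> {V. V \<subseteq> A - S \<and> card V = 29 - u}"
        using card_Diff_subset[of U A] cA by auto
    qed
    show "(\<lambda>U. A - U) \<in> {V. V \<subseteq> A - S \<and> card V = 29 - u} \<rightarrow> {U. (U \<subseteq> A \<and> card U = u) \<and> S \<subseteq> U}"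
    proof
      fix V assume "V \<in> {V. V \<subseteq> A - S \<and> card V = 29 - u}"
      then have "V \<subseteq> A - S" "card V = 29 - u" by auto
      moreover have "finite V" using \<open>V \<subseteq> A - S\<close> fA finite_subset by blast
      ultimately show "A - V \<in> {U. (U \<subseteq> A \<and> card U = u) \<and> S \<subseteq> U}"
        using card_Diff_subset[of V A] cA SA assms(2) by auto
    qed
    show "\<And>x. x \<in> {U. (U \<subseteq> A \<and> card U = u) \<and> S \<subseteq> U} \<Longrightarrow> A - (A - x) = x" by auto
    show "\<And>x. x \<in> {V. V \<subseteq> A - S \<and> card V = 29 - u} \<Longrightarrow> A - (A - x) = x" by auto
  qed
  have "card {U. (U \<subseteq> A \<and> card U = u) \<and> S \<subseteq> U} = card {V. V \<subseteq> A - S \<and> card V = 29 - u}"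
    using bij_betw_same_card[OF bij] .
  also have "\<dots> = card (A - S) choose (29 - u)" using n_subsets[of "A - S"] fA by simp
  also have "card (A - S) = 29 - card S" using card_Diff_subset[OF fS SA] cA by simp
  finally show ?thesis using False A_def by simp
qed

lemma C2:
  assumes "S \<subseteq> {..<30}"
  shows "card {U. (U \<subseteq> {Suc 0..<30} \<and> card U = u) \<and> S \<inter> U = {}}
         = (29 - card (S \<inter> {Suc 0..<30})) choose u"
proof -
  define A where "A = {Suc 0..<30}"
  have "{U. (U \<subseteq> A \<and> card U = u) \<and> S \<inter> U = {}} = {U. U \<subseteq> A - S \<and> card U = u}" by auto
  then have "card {U. (U \<subseteq> A \<and> card U = u) \<and> S \<inter> U = {}} = card (A - S) choose u"
    using n_subsets[of "A - S"] by (simp add: A_def)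
  also have "card (A - S) = card A - card (A \<inter> S)" by (rule card_Diff_subset_Int) (simp add: A_def)
  finally show ?thesis by (simp add: A_def Int_commute)
qed


context
  fixes D :: "(nat \<Rightarrow> gf4) set"
  assumes sd: "herm_self_dual 30 D"
begin

lemma lin: "linear_code 30 D" using sd by (simp add: herm_self_dual_def)
lemma dual: "herm_dual 30 D = D" using sd by (simp add: herm_self_dual_def)
lemma D_vecs: "D \<subseteq> vecs 30" using lin by (simp add: linear_code_def)
lemma finD: "finite D"
  using D_vecs supp_in_card[of "{..<30}"] vecs_supp finite_subset by fastforce
lemma zero_in: "(\<lambda>k. 0) \<in> D" using lin by (simp add: linear_code_def zero_gf4_def)
lemma add_in: "x \<in> D \<Longrightarrow> y \<in> D \<Longrightarrow> vadd x y \<in> D" using lin by (simp add: linear_code_def)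
lemma smul_in: "x \<in> D \<Longrightarrow> smul a x \<in> D" using lin by (simp add: linear_code_def)
lemma orth: "x \<in> D \<Longrightarrow> y \<in> D \<Longrightarrow> herm 30 x y = 0"
proof -
  assume "x \<in> D" "y \<in> D"
  then have "y \<in> herm_dual 30 D" using dual by simp
  then show ?thesis using \<open>x \<in> D\<close> by (simp add: herm_dual_def zero_gf4_def)
qed
lemma not_orth: "y \<in> vecs 30 \<Longrightarrow> y \<notin> D \<Longrightarrow> \<exists>x\<in>D. herm 30 x y \<noteq> 0"
proof -
  assume "y \<in> vecs 30" "y \<notin> D"
  then have "y \<notin> herm_dual 30 D" using dual by simp
  then show ?thesis using \<open>y \<in> vecs 30\<close> by (simp add: herm_dual_def zero_gf4_def)
qed

lemma L1:
  assumes T: "T \<subseteq> {..<30}"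
  shows "int (card D) * int (card (D \<inter> supp_in T)) = 4 ^ card T * int (card {x\<in>D. \<forall>k\<in>T. x k = 0})"
proof -
  define Q where "Q = supp_in T"
  have finT: "finite T" using T finite_subset by blast
  have fQ: "finite Q" and cQ: "card Q = 4 ^ card T" using supp_in_card[OF finT] Q_def by auto
  have Qv: "Q \<subseteq> vecs 30" using T by (auto simp: Q_def vecs_supp supp_in_def)
  have inner1: "(\<Sum>y\<in>Q. chi (herm 30 x y)) = (if (\<forall>k\<in>T. x k = 0) then int (card Q) else 0)"
    if xD: "x \<in> D" for x
  proof (cases "\<forall>k\<in>T. x k = 0")
    case True
    have "herm 30 x y = 0" if "y \<in> Q" for y
      unfolding herm_sum using True that by (intro sum.neutral) (auto simp: Q_def supp_in_def, metis mult_zero_left mult_zero_right)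
    then show ?thesis using True by simp
  next
    case False
    then obtain k where k: "k \<in> T" "x k \<noteq> 0" by auto
    obtain c where c: "chi (x k * (c * c)) = -1" using chi_neg2[OF k(2)] by auto
    define z where "z = (\<lambda>i. if i = k then c else 0)"
    have hz: "herm 30 x z = x k * (c * c)"
    proof -
      have "herm 30 x z = (\<Sum>i<30. if i = k then x k * (c * c) else 0)"
        unfolding herm_sum z_def by (intro sum.cong) auto
      also have "\<dots> = x k * (c * c)" using k T by auto
      finally show ?thesis .
    qed
    have "(\<Sum>y\<in>Q. chi (herm 30 x y)) = 0"
    proof (rule char_sum_zero[where z=z])
      show "finite Q" by (rule fQ)
      show "vadd y z \<in> Q" if "y \<in> Q" for y using that k by (auto simp: Q_def supp_in_def z_def)
      show "herm 30 x (vadd y z) = herm 30 x y + herm 30 x z" for y by (rule herm_add_right)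
      show "chi (herm 30 x z) = -1" using hz c by simp
    qed
    then show ?thesis using False by auto
  qed
  have inner2: "(\<Sum>x\<in>D. chi (herm 30 x y)) = (if y \<in> D then int (card D) else 0)"
    if yQ: "y \<in> Q" for y
  proof (cases "y \<in> D")
    case True then show ?thesis using orth by simp
  next
    case False
    have "y \<in> vecs 30" using yQ Qv by auto
    then obtain x0 where x0: "x0 \<in> D" "herm 30 x0 y \<noteq> 0" using not_orth False by blast
    obtain c where c: "chi (c * herm 30 x0 y) = -1" using chi_neg1[OF x0(2)] by auto
    have "(\<Sum>x\<in>D. chi (herm 30 x y)) = 0"
    proof (rule char_sum_zero[where z="smul c x0"])
      show "finite D" by (rule finD)
      show "vadd x (smul c x0) \<in> D" if "x \<in> D" for x using that x0 add_in smul_in by blast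
      show "herm 30 (vadd x (smul c x0)) y = herm 30 x y + herm 30 (smul c x0) y" for x
        by (rule herm_add_left)
      show "chi (herm 30 (smul c x0) y) = -1" using c by (simp add: herm_smul_left)
    qed
    then show ?thesis using False by simp
  qed
  have "(\<Sum>x\<in>D. \<Sum>y\<in>Q. chi (herm 30 x y)) = (\<Sum>x\<in>D. if (\<forall>k\<in>T. x k = 0) then int (card Q) else 0)"
    using inner1 by (intro sum.cong) auto
  also have "\<dots> = int (card Q) * int (card {x\<in>D. \<forall>k\<in>T. x k = 0})"
    using finD by (simp add: sum_if_const)
  finally have s1: "(\<Sum>x\<in>D. \<Sum>y\<in>Q. chi (herm 30 x y)) = int (card Q) * int (card {x\<in>D. \<forall>k\<in>T. x k = 0})" .
  have "(\<Sum>x\<in>D. \<Sum>y\<in>Q. chi (herm 30 x y)) = (\<Sum>y\<in>Q. \<Sum>x\<in>D. chi (herm 30 x y))"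
    by (rule sum.swap)
  also have "\<dots> = (\<Sum>y\<in>Q. if y \<in> D then int (card D) else 0)"
    using inner2 by (intro sum.cong) auto
  also have "\<dots> = int (card D) * int (card {y\<in>Q. y \<in> D})"
    using fQ by (simp add: sum_if_const)
  also have "{y\<in>Q. y \<in> D} = D \<inter> supp_in T" by (auto simp: Q_def)
  finally show ?thesis using s1 cQ by simp
qed

lemma cardD: "card D = 4 ^ 15"
proof -
  have e1: "{x\<in>D. \<forall>k\<in>{..<30}. x k = 0} = {\<lambda>k. 0}"
  proof
    show "{x\<in>D. \<forall>k\<in>{..<30}. x k = 0} \<subseteq> {\<lambda>k. 0}"
    proof
      fix x assume x: "x \<in> {x\<in>D. \<forall>k\<in>{..<30}. x k = 0}"
      then have "x \<in> vecs 30" using D_vecs by auto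
      then have "x = (\<lambda>k. 0)" using x
        by (auto simp: vecs_def zero_gf4_def fun_eq_iff) (metis lessThan_iff not_le)
      then show "x \<in> {\<lambda>k. 0}" by simp
    qed
    show "{\<lambda>k. 0} \<subseteq> {x\<in>D. \<forall>k\<in>{..<30}. x k = 0}" using zero_in by auto
  qed
  have e2: "D \<inter> supp_in {..<30} = D" using D_vecs vecs_supp by auto
  have "int (card D) * int (card D) = 4 ^ 30"
    using L1[of "{..<30}"] e1 e2 by simp
  then have "(int (card D))^2 = (4 ^ 15)^2" by (simp add: power2_eq_square)
  then have "int (card D) = 4 ^ 15" by (subst (asm) power2_eq_iff_nonneg) auto
  then show ?thesis by simp
qed

lemma L2:
  assumes U: "U \<subseteq> {..<30}"
  shows "4 ^ 15 * card (D \<inter> supp_in ({..<30} - U)) = 4 ^ (30 - card U) * card (D \<inter> supp_in U)"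
proof -
  have fU: "finite U" using U finite_subset by blast
  have cT: "card ({..<30} - U) = 30 - card U" using card_Diff_subset[OF fU U] by simp
  have e: "{x\<in>D. \<forall>k\<in>{..<30} - U. x k = 0} = D \<inter> supp_in U"
  proof -
    have "(\<forall>k\<in>{..<30} - U. x k = 0) = (x \<in> supp_in U)" if "x \<in> D" for x
    proof -
      have "x \<in> vecs 30" using that D_vecs by auto
      then show ?thesis using U
        by (auto simp: vecs_def supp_in_def zero_gf4_def) (metis Diff_iff lessThan_iff not_le)
    qed
    then show ?thesis by auto
  qed
  have "int (4 ^ 15 * card (D \<inter> supp_in ({..<30} - U))) = int (4 ^ (30 - card U) * card (D \<inter> supp_in U))"
    using L1[of "{..<30} - U"] e cT cardD by simp
  then show ?thesis by (simp only: of_nat_eq_iff)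
qed

end


lemma wt_alt: "wt 30 x = card {k. k < 30 \<and> x k \<noteq> 0}" by (simp add: wt_def zero_gf4_def)

lemma supp_fin: "finite {k. k < (30::nat) \<and> x k \<noteq> 0}"
  by (rule finite_subset[of _ "{..<30}"]) auto

context
  fixes D :: "(nat \<Rightarrow> gf4) set"
  assumes sd: "herm_self_dual 30 D" and mw: "min_weight 30 D = 10"
begin

lemmas D_vecs' = D_vecs[OF sd] and finD' = finD[OF sd] and zero_in' = zero_in[OF sd]
  and cardD' = cardD[OF sd] and orth' = orth[OF sd]

lemma mw_le: assumes "x \<in> D" "x \<noteq> (\<lambda>k. 0)" shows "10 \<le> wt 30 x"
proof -
  have "(LEAST w. \<exists>x\<in>D. x \<noteq> (\<lambda>k. G0) \<and> wt 30 x = w) \<le> wt 30 x"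
    by (rule Least_le) (use assms in \<open>auto simp: zero_gf4_def\<close>)
  then show ?thesis using mw by (simp add: min_weight_def)
qed

lemma ex10: "\<exists>x\<in>D. x \<noteq> (\<lambda>k. 0) \<and> wt 30 x = 10"
proof -
  have "\<exists>x\<in>D. x \<noteq> (\<lambda>k. 0)"
  proof (rule ccontr)
    assume "\<not> ?thesis"
    then have "D \<subseteq> {\<lambda>k. 0}" by auto
    then have "card D \<le> 1" using card_mono[of "{\<lambda>k. 0}" D] by simp
    then show False using cardD' by simp
  qed
  then obtain x where "x \<in> D" "x \<noteq> (\<lambda>k. 0)" by blast
  then have "\<exists>x'\<in>D. x' \<noteq> (\<lambda>k. G0) \<and> wt 30 x' = wt 30 x" by (auto simp: zero_gf4_def)
  then have "\<exists>x'\<in>D. x' \<noteq> (\<lambda>k. G0) \<and> wt 30 x' = (LEAST w. \<exists>x\<in>D. x \<noteq> (\<lambda>k. G0) \<and> wt 30 x = w)"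
    by (rule LeastI)
  then show ?thesis using mw by (simp add: min_weight_def zero_gf4_def)
qed

lemma wt_zero_iff: assumes "x \<in> D" shows "(wt 30 x = 0) = (x = (\<lambda>k. 0))"
proof -
  have xv: "x \<in> vecs 30" using assms D_vecs' by auto
  have "(wt 30 x = 0) = ({k. k < 30 \<and> x k \<noteq> 0} = {})"
    unfolding wt_alt using supp_fin[of x] by simp
  also have "\<dots> = (x = (\<lambda>k. 0))"
  proof
    assume E: "{k. k < 30 \<and> x k \<noteq> 0} = {}"
    show "x = (\<lambda>k. 0)"
    proof
      fix k show "x k = 0"
      proof (cases "k < 30")
        case True then show ?thesis using E by blast
      next
        case False then show ?thesis using xv by (simp add: vecs_def zero_gf4_def)
      qed
    qed
  qed auto
  finally show ?thesis .
qed

lemma wt_even: assumes "x \<in> D" shows "even (wt 30 x)"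
proof -
  have "herm 30 x x = 0" using orth' assms by simp
  moreover have "herm 30 x x = (\<Sum>k<30. if x k \<noteq> 0 then 1 else 0)"
    unfolding herm_sum by (intro sum.cong) (auto simp: cube)
  moreover have "(\<Sum>k<30. if x k \<noteq> 0 then (1::gf4) else 0) = of_nat (card {k\<in>{..<30}. x k \<noteq> 0})"
    by (simp add: sum_if_const)
  moreover have "{k\<in>{..<30}. x k \<noteq> 0} = {k. k < 30 \<and> x k \<noteq> 0}" by auto
  ultimately have "(of_nat (wt 30 x) :: gf4) = 0" by (simp add: wt_alt)
  then show ?thesis by (simp add: of_nat_gf4 split: if_splits)
qed

lemma supp_char: assumes "x \<in> vecs 30" shows "(x \<in> supp_in U) = ({k. k < 30 \<and> x k \<noteq> 0} \<subseteq> U)"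
proof -
  have xv: "\<And>k. \<not> k < 30 \<Longrightarrow> x k = 0" using assms by (simp add: vecs_def zero_gf4_def)
  show ?thesis unfolding supp_in_def using xv by blast
qed

lemma supp_char2: assumes "x \<in> vecs 30" shows "(x \<in> supp_in ({..<30} - U)) = ({k. k < 30 \<and> x k \<noteq> 0} \<inter> U = {})"
proof -
  have xv: "\<And>k. \<not> k < 30 \<Longrightarrow> x k = 0" using assms by (simp add: vecs_def zero_gf4_def)
  show ?thesis unfolding supp_in_def using xv by blast
qed

lemma EQ:
  assumes u: "20 \<le> u" "u \<le> 29"
  shows "(\<Sum>w<30. card {x\<in>D. x 0 = 0 \<and> wt 30 x = w} * ((29 - w) choose (29 - u)))
       = 4 ^ (u - 15) * ((29 choose u) + (if u = 20 then card {x\<in>D. wt 30 x = 10 \<and> x 0 \<noteq> 0} else 0))"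
proof -
  define A where "A = {Suc 0..<30}"
  define P where "P = {U. U \<subseteq> A \<and> card U = u}"
  define N where "N X = card (D \<inter> supp_in X)" for X
  have fP: "finite P" unfolding P_def by (rule finite_subset[of _ "Pow A"]) (auto simp: A_def)
  have PU: "U \<subseteq> {..<30} \<and> card U = u" if "U \<in> P" for U using that by (auto simp: P_def A_def)
  have s1: "(\<Sum>U\<in>P. N U) = 4^(u-15) * (\<Sum>U\<in>P. N ({..<30} - U))"
  proof -
    have "N U = 4^(u-15) * N ({..<30} - U)" if "U \<in> P" for U
    proof -
      have l2: "4 ^ 15 * N ({..<30} - U) = 4 ^ (30 - u) * N U"
        using L2[OF sd, of U] PU[OF that] by (simp add: N_def)
      have "(4::nat) ^ 15 = 4 ^ (30 - u) * 4 ^ (u - 15)" using u by (simp add: power_add[symmetric])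
      then have "4 ^ (30 - u) * (4^(u-15) * N ({..<30} - U)) = 4 ^ (30 - u) * N U"
        using l2 by (simp add: mult.assoc[symmetric])
      then show ?thesis by simp
    qed
    then show ?thesis by (simp add: sum_distrib_left)
  qed
  have s2: "(\<Sum>U\<in>P. N U) = (\<Sum>w<30. card {x\<in>D. x 0 = 0 \<and> wt 30 x = w} * ((29 - w) choose (29 - u)))"
  proof -
    have "(\<Sum>U\<in>P. N U) = (\<Sum>U\<in>P. card {x\<in>D. x \<in> supp_in U})"
      by (simp add: N_def Int_def)
    also have "\<dots> = (\<Sum>x\<in>D. card {U\<in>P. x \<in> supp_in U})"
      by (rule double_count[OF finD' fP])
    also have "\<dots> = (\<Sum>x\<in>D. if x 0 = 0 then (29 - wt 30 x) choose (29 - u) else 0)"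
    proof (rule sum.cong)
      fix x assume x: "x \<in> D"
      then have xv: "x \<in> vecs 30" using D_vecs' by auto
      have "{U\<in>P. x \<in> supp_in U} = {U. (U \<subseteq> {Suc 0..<30} \<and> card U = u) \<and> {k. k < 30 \<and> x k \<noteq> 0} \<subseteq> U}"
        using supp_char[OF xv] by (auto simp: P_def A_def)
      then show "card {U\<in>P. x \<in> supp_in U} = (if x 0 = 0 then (29 - wt 30 x) choose (29 - u) else 0)"
        using C1[of "{k. k < 30 \<and> x k \<noteq> 0}" u] u by (simp add: wt_alt subset_iff)
    qed simp
    also have "\<dots> = (\<Sum>x\<in>{x\<in>D. x 0 = 0}. (29 - wt 30 x) choose (29 - u))"
      using finD' by (simp add: sum.inter_filter)
    also have "\<dots> = (\<Sum>w<30. \<Sum>x\<in>{x\<in>{x\<in>D. x 0 = 0}. wt 30 x = w}. (29 - wt 30 x) choose (29 - u))"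
    proof (rule sum.group[symmetric])
      show "finite {x\<in>D. x 0 = 0}" using finD' by simp
      show "finite {..<30::nat}" by simp
      show "(\<lambda>x. wt 30 x) ` {x\<in>D. x 0 = 0} \<subseteq> {..<30}"
      proof
        fix w assume "w \<in> (\<lambda>x. wt 30 x) ` {x\<in>D. x 0 = 0}"
        then obtain x where x: "x 0 = 0" "w = wt 30 x" by auto
        have "{k. k < 30 \<and> x k \<noteq> 0} \<subseteq> {Suc 0..<30}" using x(1) by (auto simp: Suc_le_eq) (metis gr0I)
        then have "card {k. k < 30 \<and> x k \<noteq> 0} \<le> 29" using card_mono[of "{Suc 0..<30}"] by fastforce
        then show "w \<in> {..<30}" using x by (simp add: wt_alt)
      qed
    qed
    also have "\<dots> = (\<Sum>w<30. card {x\<in>D. x 0 = 0 \<and> wt 30 x = w} * ((29 - w) choose (29 - u)))"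
    proof (rule sum.cong)
      fix w
      have "(\<Sum>x\<in>{x\<in>{x\<in>D. x 0 = 0}. wt 30 x = w}. (29 - wt 30 x) choose (29 - u))
          = (\<Sum>x\<in>{x\<in>D. x 0 = 0 \<and> wt 30 x = w}. (29 - w) choose (29 - u))"
        by (rule sum.cong) auto
      then show "(\<Sum>x\<in>{x\<in>{x\<in>D. x 0 = 0}. wt 30 x = w}. (29 - wt 30 x) choose (29 - u))
          = card {x\<in>D. x 0 = 0 \<and> wt 30 x = w} * ((29 - w) choose (29 - u))" by simp
    qed simp
    finally show ?thesis .
  qed
  have s3: "(\<Sum>U\<in>P. N ({..<30} - U)) = (29 choose u) + (if u = 20 then card {x\<in>D. wt 30 x = 10 \<and> x 0 \<noteq> 0} else 0)"
  proof -
    have "(\<Sum>U\<in>P. N ({..<30} - U)) = (\<Sum>U\<in>P. card {x\<in>D. x \<in> supp_in ({..<30} - U)})"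
      by (simp add: N_def Int_def)
    also have "\<dots> = (\<Sum>x\<in>D. card {U\<in>P. x \<in> supp_in ({..<30} - U)})"
      by (rule double_count[OF finD' fP])
    also have "\<dots> = (\<Sum>x\<in>D. (if x = (\<lambda>k. 0) then 29 choose u else 0)
                      + (if u = 20 \<and> wt 30 x = 10 \<and> x 0 \<noteq> 0 then 1 else 0))"
    proof (rule sum.cong)
      fix x assume x: "x \<in> D"
      then have xv: "x \<in> vecs 30" using D_vecs' by auto
      define S where "S = {k. k < 30 \<and> x k \<noteq> 0}"
      have fS: "finite S" unfolding S_def by (rule supp_fin)
      have cS: "card S = wt 30 x" by (simp add: S_def wt_alt)
      have "{U\<in>P. x \<in> supp_in ({..<30} - U)} = {U. (U \<subseteq> {Suc 0..<30} \<and> card U = u) \<and> S \<inter> U = {}}"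
        using supp_char2[OF xv] by (auto simp: P_def A_def S_def)
      then have c: "card {U\<in>P. x \<in> supp_in ({..<30} - U)} = (29 - card (S \<inter> {Suc 0..<30})) choose u"
        using C2[of S u] by (simp add: S_def subset_iff)
      have SA: "S \<inter> {Suc 0..<30} = S - {0}" by (auto simp: S_def Suc_le_eq)
      have m: "card (S \<inter> {Suc 0..<30}) = wt 30 x - (if x 0 \<noteq> 0 then 1 else 0)"
      proof (cases "x 0 \<noteq> 0")
        case True
        then have "0 \<in> S" by (simp add: S_def)
        then show ?thesis using SA fS cS True by (simp add: card_Diff_singleton)
      next
        case False
        then have "0 \<notin> S" by (simp add: S_def)
        then show ?thesis using SA cS False by simp
      qed
      show "card {U\<in>P. x \<in> supp_in ({..<30} - U)} = (if x = (\<lambda>k. 0) then 29 choose u else 0)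
                      + (if u = 20 \<and> wt 30 x = 10 \<and> x 0 \<noteq> 0 then 1 else 0)"
      proof (cases "x = (\<lambda>k. 0)")
        case True
        then have "wt 30 x = 0" using wt_zero_iff[OF x] by simp
        then show ?thesis using c m True by simp
      next
        case False
        then have w10: "10 \<le> wt 30 x" using mw_le x by blast
        show ?thesis
        proof (cases "wt 30 x = 10 \<and> x 0 \<noteq> 0")
          case True
          then have "card (S \<inter> {Suc 0..<30}) = 9" using m by simp
          then show ?thesis using c False True u by (auto simp: binomial_eq_0)
        next
          case nt: False
          have ev: "even (wt 30 x)" using wt_even x by blast
          have "10 \<le> card (S \<inter> {Suc 0..<30})"
          proof (cases "x 0 \<noteq> 0")
            case True
            then have "wt 30 x \<noteq> 10" using nt by simp
            then have "11 \<le> wt 30 x" using w10 by simp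
            then show ?thesis using m True by simp
          next
            case f: False
            then show ?thesis using m w10 by simp
          qed
          then have "(29 - card (S \<inter> {Suc 0..<30})) choose u = 0" using u by (simp add: binomial_eq_0)
          then show ?thesis using c False nt by auto
        qed
      qed
    qed simp
    also have "\<dots> = (\<Sum>x\<in>D. if x = (\<lambda>k. 0) then 29 choose u else 0)
                    + (\<Sum>x\<in>D. if u = 20 \<and> wt 30 x = 10 \<and> x 0 \<noteq> 0 then 1 else 0)"
      by (rule sum.distrib)
    also have "(\<Sum>x\<in>D. if x = (\<lambda>k. 0) then 29 choose u else 0) = 29 choose u"
      using finD' zero_in' by simp
    also have "(\<Sum>x\<in>D. if u = 20 \<and> wt 30 x = 10 \<and> x 0 \<noteq> 0 then 1 else 0)
             = (if u = 20 then card {x\<in>D. wt 30 x = 10 \<and> x 0 \<noteq> 0} else 0)"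
      using finD' by (simp add: sum_if_const)
    finally show ?thesis .
  qed
  show ?thesis using s1 s2 s3 by simp
qed


lemma B0: "card {x\<in>D. x 0 = 0 \<and> wt 30 x = 0} = 1"
proof -
  have "{x\<in>D. x 0 = 0 \<and> wt 30 x = 0} = {\<lambda>k. 0}" using wt_zero_iff zero_in' by auto
  then show ?thesis by simp
qed

lemma Bz:
  assumes "w < 30" "w \<notin> {0,10,12,14,16,18,20,22,24,26,28}"
  shows "card {x\<in>D. x 0 = 0 \<and> wt 30 x = w} = 0"
proof -
  have "{x\<in>D. x 0 = 0 \<and> wt 30 x = w} = {}"
  proof (rule ccontr)
    assume "{x\<in>D. x 0 = 0 \<and> wt 30 x = w} \<noteq> {}"
    then obtain x where x: "x \<in> D" "wt 30 x = w" by auto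
    have "w \<noteq> 0" using assms by auto
    then have "x \<noteq> (\<lambda>k. 0)" using wt_zero_iff[OF x(1)] x(2) by auto
    then have "10 \<le> w" using mw_le x by blast
    moreover have "even w" using wt_even x by blast
    ultimately have "w = 10 \<or> w = 12 \<or> w = 14 \<or> w = 16 \<or> w = 18 \<or> w = 20 \<or> w = 22 \<or> w = 24 \<or> w = 26 \<or> w = 28"
      using assms(1) by presburger
    then show False using assms(2) by auto
  qed
  then show ?thesis by (metis card.empty)
qed

lemma split10: "card {x\<in>D. wt 30 x = 10} = card {x\<in>D. x 0 = 0 \<and> wt 30 x = 10} + card {x\<in>D. wt 30 x = 10 \<and> x 0 \<noteq> 0}"
proof -
  have "{x\<in>D. wt 30 x = 10} = {x\<in>D. x 0 = 0 \<and> wt 30 x = 10} \<union> {x\<in>D. wt 30 x = 10 \<and> x 0 \<noteq> 0}" by auto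
  moreover have "card ({x\<in>D. x 0 = 0 \<and> wt 30 x = 10} \<union> {x\<in>D. wt 30 x = 10 \<and> x 0 \<noteq> 0})
     = card {x\<in>D. x 0 = 0 \<and> wt 30 x = 10} + card {x\<in>D. wt 30 x = 10 \<and> x 0 \<noteq> 0}"
    by (rule card_Un_disjoint) (use finD' in auto)
  ultimately show ?thesis by simp
qed

lemma wt_smul: assumes "(a::gf4) \<noteq> 0" shows "wt 30 (smul a x) = wt 30 x"
  using mult_eq0[OF assms] by (simp add: wt_alt)

lemma scale_card:
  assumes ab: "a * b = (1::gf4)"
  shows "card {x\<in>D. wt 30 x = 10 \<and> x 0 = a} = card {x\<in>D. wt 30 x = 10 \<and> x 0 = 1}"
proof -
  have a0: "a \<noteq> 0" and b0: "b \<noteq> 0" using ab by auto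
  have ba: "b * a = 1" using ab by (simp add: mult.commute)
  have "bij_betw (smul a) {x\<in>D. wt 30 x = 10 \<and> x 0 = 1} {x\<in>D. wt 30 x = 10 \<and> x 0 = a}"
  proof (rule bij_betwI[where g="smul b"])
    show "smul a \<in> {x\<in>D. wt 30 x = 10 \<and> x 0 = 1} \<rightarrow> {x\<in>D. wt 30 x = 10 \<and> x 0 = a}"
      using smul_in[OF sd] wt_smul[OF a0] by auto
    show "smul b \<in> {x\<in>D. wt 30 x = 10 \<and> x 0 = a} \<rightarrow> {x\<in>D. wt 30 x = 10 \<and> x 0 = 1}"
      using smul_in[OF sd] wt_smul[OF b0] ba by auto
    show "smul b (smul a x) = x" for x by (simp add: fun_eq_iff mult.assoc[symmetric] ba)
    show "smul a (smul b x) = x" for x by (simp add: fun_eq_iff mult.assoc[symmetric] ab)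
  qed
  then show ?thesis by (simp add: bij_betw_same_card)
qed

lemma g3: "card {x\<in>D. wt 30 x = 10 \<and> x 0 \<noteq> 0} = 3 * card {x\<in>D. wt 30 x = 10 \<and> x 0 = 1}"
proof -
  have nz: "(c::gf4) \<noteq> 0 \<longleftrightarrow> c = 1 \<or> c = GW \<or> c = GW2" for c by (cases c) (simp_all add: gf4_defs)
  have d: "(1::gf4) \<noteq> GW" "(1::gf4) \<noteq> GW2" "GW \<noteq> GW2" by (simp_all add: gf4_defs)
  have "{x\<in>D. wt 30 x = 10 \<and> x 0 \<noteq> 0} = ({x\<in>D. wt 30 x = 10 \<and> x 0 = 1} \<union> {x\<in>D. wt 30 x = 10 \<and> x 0 = GW})
           \<union> {x\<in>D. wt 30 x = 10 \<and> x 0 = GW2}" using nz by auto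
  moreover have "card (({x\<in>D. wt 30 x = 10 \<and> x 0 = 1} \<union> {x\<in>D. wt 30 x = 10 \<and> x 0 = GW})
           \<union> {x\<in>D. wt 30 x = 10 \<and> x 0 = GW2})
     = (card {x\<in>D. wt 30 x = 10 \<and> x 0 = 1} + card {x\<in>D. wt 30 x = 10 \<and> x 0 = GW})
           + card {x\<in>D. wt 30 x = 10 \<and> x 0 = GW2}"
    using finD' d by (subst card_Un_disjoint, auto, subst card_Un_disjoint, auto)
  moreover have "card {x\<in>D. wt 30 x = 10 \<and> x 0 = GW} = card {x\<in>D. wt 30 x = 10 \<and> x 0 = 1}"
    by (rule scale_card[where b=GW2]) (simp add: gf4_defs)
  moreover have "card {x\<in>D. wt 30 x = 10 \<and> x 0 = GW2} = card {x\<in>D. wt 30 x = 10 \<and> x 0 = 1}"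
    by (rule scale_card[where b=GW]) (simp add: gf4_defs)
  ultimately show ?thesis by simp
qed

lemma alpha_pos: "1 \<le> card {x\<in>D. wt 30 x = 10}"
proof -
  obtain x where "x \<in> D" "wt 30 x = 10" using ex10 by blast
  then have "{x\<in>D. wt 30 x = 10} \<noteq> {}" by auto
  then show ?thesis using finD' by (simp add: Suc_le_eq card_gt_0_iff)
qed
end


lemma sum30:
  fixes B g :: "nat \<Rightarrow> nat"
  assumes "\<And>w. w < 30 \<Longrightarrow> w \<notin> {0,10,12,14,16,18,20,22,24,26,28} \<Longrightarrow> B w = 0"
  shows "(\<Sum>w<30. B w * g w) = B 0 * g 0 + B 10 * g 10 + B 12 * g 12 + B 14 * g 14 + B 16 * g 16
     + B 18 * g 18 + B 20 * g 20 + B 22 * g 22 + B 24 * g 24 + B 26 * g 26 + B 28 * g 28"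
proof -
  have "(\<Sum>w<30. B w * g w) = (\<Sum>w\<in>{0,10,12,14,16,18,20,22,24,26,28}. B w * g w)"
    by (rule sum.mono_neutral_right) (auto simp: assms)
  also have "\<dots> = B 0 * g 0 + B 10 * g 10 + B 12 * g 12 + B 14 * g 14 + B 16 * g 16
     + B 18 * g 18 + B 20 * g 20 + B 22 * g 22 + B 24 * g 24 + B 26 * g 26 + B 28 * g 28"
    by (simp add: add.assoc)
  finally show ?thesis .
qed

theorem fact5p4:
  fixes D :: "(nat \<Rightarrow> gf4) set"
  assumes "near_extremal_30 D"
  shows "\<exists>\<beta>::nat. card {x \<in> D. wt 30 x = 10} = 9 * \<beta> \<and> 1 \<le> \<beta> \<and> \<beta> \<le> 1319"
proof -
  have sd: "herm_self_dual 30 D" and mw: "min_weight 30 D = 10"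
    using assms by (simp_all add: near_extremal_30_def)
  define B where "B w = card {x\<in>D. x 0 = 0 \<and> wt 30 x = w}" for w
  define \<gamma> where "\<gamma> = card {x\<in>D. wt 30 x = 10 \<and> x 0 \<noteq> 0}"
  define \<beta> where "\<beta> = card {x\<in>D. wt 30 x = 10 \<and> x 0 = 1}"
  have Bz: "\<And>w. w < 30 \<Longrightarrow> w \<notin> {0,10,12,14,16,18,20,22,24,26,28} \<Longrightarrow> B w = 0"
    using Bz[OF sd mw] by (simp add: B_def)
  have B0: "B 0 = 1" using B0[OF sd mw] by (simp add: B_def)
  have E: "B 0 * ((29 - 0) choose (29 - u)) + B 10 * ((29 - 10) choose (29 - u))
     + B 12 * ((29 - 12) choose (29 - u)) + B 14 * ((29 - 14) choose (29 - u))
     + B 16 * ((29 - 16) choose (29 - u)) + B 18 * ((29 - 18) choose (29 - u))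
     + B 20 * ((29 - 20) choose (29 - u)) + B 22 * ((29 - 22) choose (29 - u))
     + B 24 * ((29 - 24) choose (29 - u)) + B 26 * ((29 - 26) choose (29 - u))
     + B 28 * ((29 - 28) choose (29 - u))
     = 4 ^ (u - 15) * ((29 choose u) + (if u = 20 then \<gamma> else 0))"
    if "20 \<le> u" "u \<le> 29" for u
  proof -
    have "(\<Sum>w<30. B w * ((29 - w) choose (29 - u)))
       = 4 ^ (u - 15) * ((29 choose u) + (if u = 20 then \<gamma> else 0))"
      using EQ[OF sd mw that] by (simp add: B_def \<gamma>_def)
    then show ?thesis using sum30[of B "\<lambda>w. (29 - w) choose (29 - u)", OF Bz] by simp
  qed
  note bsimps = binomial_fact' fact_numeral binomial_eq_0 B0
  have e20: "92378 * B 10 + 24310 * B 12 + 5005 * B 14 + 715 * B 16 + 55 * B 18 + 1 * B 20 = 10245350115 + 1024 * \<gamma>" using E[of 20] by (simp add: bsimps; linarith)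
  have e21: "75582 * B 10 + 24310 * B 12 + 6435 * B 14 + 1287 * B 16 + 165 * B 18 + 9 * B 20 = 17576333775" using E[of 21] by (simp add: bsimps; linarith)
  have e22: "50388 * B 10 + 19448 * B 12 + 6435 * B 14 + 1716 * B 16 + 330 * B 18 + 36 * B 20 + 1 * B 22 = 25570258740" using E[of 22] by (simp add: bsimps; linarith)
  have e23: "27132 * B 10 + 12376 * B 12 + 5005 * B 14 + 1716 * B 16 + 462 * B 18 + 84 * B 20 + 7 * B 22 = 31130435700" using E[of 23] by (simp add: bsimps; linarith)
  have e24: "11628 * B 10 + 6188 * B 12 + 3003 * B 14 + 1287 * B 16 + 462 * B 18 + 126 * B 20 + 21 * B 22 + 1 * B 24 = 31130791965" using E[of 24] by (simp add: bsimps; linarith)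
  have e25: "3876 * B 10 + 2380 * B 12 + 1365 * B 14 + 715 * B 16 + 330 * B 18 + 126 * B 20 + 35 * B 22 + 5 * B 24 = 24904704825" using E[of 25] by (simp add: bsimps; linarith)
  have e26: "969 * B 10 + 680 * B 12 + 455 * B 14 + 286 * B 16 + 165 * B 18 + 84 * B 20 + 35 * B 22 + 10 * B 24 + 1 * B 26 = 15325983162" using E[of 26] by (simp add: bsimps; linarith)
  have e27: "171 * B 10 + 136 * B 12 + 105 * B 14 + 78 * B 16 + 55 * B 18 + 36 * B 20 + 21 * B 22 + 10 * B 24 + 3 * B 26 = 6811549290" using E[of 27] by (simp add: bsimps; linarith)
  have e28: "19 * B 10 + 17 * B 12 + 15 * B 14 + 13 * B 16 + 11 * B 18 + 9 * B 20 + 7 * B 22 + 5 * B 24 + 3 * B 26 + 1 * B 28 = 1946157027" using E[of 28] by (simp add: bsimps; linarith)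
  have e29: "1 * B 10 + 1 * B 12 + 1 * B 14 + 1 * B 16 + 1 * B 18 + 1 * B 20 + 1 * B 22 + 1 * B 24 + 1 * B 26 + 1 * B 28 = 268435455" using E[of 29] by (simp add: bsimps; linarith)
  have c1: "128 * (92378 * B 10 + 24310 * B 12 + 5005 * B 14 + 715 * B 16 + 55 * B 18 + 1 * B 20) + 1760 * (50388 * B 10 + 19448 * B 12 + 6435 * B 14 + 1716 * B 16 + 330 * B 18 + 36 * B 20 + 1 * B 22) + 5720 * (11628 * B 10 + 6188 * B 12 + 3003 * B 14 + 1287 * B 16 + 462 * B 18 + 126 * B 20 + 21 * B 22 + 1 * B 24) + 10010 * (969 * B 10 + 680 * B 12 + 455 * B 14 + 286 * B 16 + 165 * B 18 + 84 * B 20 + 35 * B 22 + 10 * B 24 + 1 * B 26) + 12155 * (19 * B 10 + 17 * B 12 + 15 * B 14 + 13 * B 16 + 11 * B 18 + 9 * B 20 + 7 * B 22 + 5 * B 24 + 3 * B 26 + 1 * B 28) + 640 * (17576333775) + 3520 * (31130435700) + 8008 * (24904704825) + 11440 * (6811549290) + 12155 * (268435455) = 128 * (10245350115 + 1024 * \<gamma>) + 1760 * (25570258740) + 5720 * (31130791965) + 10010 * (15325983162) + 12155 * (1946157027) + 640 * (75582 * B 10 + 24310 * B 12 + 6435 * B 14 + 1287 * B 16 + 165 * B 18 + 9 * B 20) + 3520 * (27132 * B 10 + 12376 * B 12 + 5005 * B 14 + 1716 * B 16 + 462 * B 18 + 84 * B 20 + 7 * B 22) + 8008 * (3876 * B 10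 + 2380 * B 12 + 1365 * B 14 + 715 * B 16 + 330 * B 18 + 126 * B 20 + 35 * B 22 + 5 * B 24) + 11440 * (171 * B 10 + 136 * B 12 + 105 * B 14 + 78 * B 16 + 55 * B 18 + 36 * B 20 + 21 * B 22 + 10 * B 24 + 3 * B 26) + 12155 * (1 * B 10 + 1 * B 12 + 1 * B 14 + 1 * B 16 + 1 * B 18 + 1 * B 20 + 1 * B 22 + 1 * B 24 + 1 * B 26 + 1 * B 28)"
    by (simp only: e20 e21 e22 e23 e24 e25 e26 e27 e28 e29)
  have c1': "B 10 = 2 * \<gamma>" using c1 by (simp add: distrib_left mult.assoc[symmetric]; linarith)
  have c2: "6016 * (75582 * B 10 + 24310 * B 12 + 6435 * B 14 + 1287 * B 16 + 165 * B 18 + 9 * B 20) + 34560 * (27132 * B 10 + 12376 * B 12 + 5005 * B 14 + 1716 * B 16 + 462 * B 18 + 84 * B 20 + 7 * B 22) + 79992 * (3876 * B 10 + 2380 * B 12 + 1365 * B 14 + 715 * B 16 + 330 * B 18 + 126 * B 20 + 35 * B 22 + 5 * B 24) + 114972 * (171 * B 10 + 136 * B 12 + 105 * B 14 + 78 * B 16 + 55 * B 18 + 36 * B 20 + 21 * B 22 + 10 * B 24 + 3 * B 26) + 122265 * (1 * B 10 + 1 * B 12 + 1 * B 14 + 1 * B 16 + 1 * B 18 + 1 * B 20 + 1 * B 22 + 1 * B 24 + 1 * B 26 + 1 * B 28) + 1152 * (10245350115 + 1024 * \<gamma>) + 16992 * (25570258740) + 56760 * (31130791965) + 100386 * (15325983162)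 + 122265 * (1946157027) = 6016 * (17576333775) + 34560 * (31130435700) + 79992 * (24904704825) + 114972 * (6811549290) + 122265 * (268435455) + 1152 * (92378 * B 10 + 24310 * B 12 + 5005 * B 14 + 715 * B 16 + 55 * B 18 + 1 * B 20) + 16992 * (50388 * B 10 + 19448 * B 12 + 6435 * B 14 + 1716 * B 16 + 330 * B 18 + 36 * B 20 + 1 * B 22) + 56760 * (11628 * B 10 + 6188 * B 12 + 3003 * B 14 + 1287 * B 16 + 462 * B 18 + 126 * B 20 + 21 * B 22 + 1 * B 24) + 100386 * (969 * B 10 + 680 * B 12 + 455 * B 14 + 286 * B 16 + 165 * B 18 + 84 * B 20 + 35 * B 22 + 10 * B 24 + 1 * B 26) + 122265 * (19 * B 10 + 17 * B 12 + 15 * B 14 + 13 * B 16 + 11 * B 18 + 9 * B 20 + 7 * B 22 + 5 * B 24 + 3 * B 26 + 1 * B 28)"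
    by (simp only: e20 e21 e22 e23 e24 e25 e26 e27 e28 e29)
  have c2': "B 12 + 18 * \<gamma> = 71253" using c2 by (simp add: distrib_left mult.assoc[symmetric]; linarith)
  have spl: "card {x\<in>D. wt 30 x = 10} = B 10 + \<gamma>" using split10[OF sd mw] by (simp add: B_def \<gamma>_def)
  have g3: "\<gamma> = 3 * \<beta>" using g3[OF sd mw] by (simp add: \<gamma>_def \<beta>_def)
  have pos: "1 \<le> card {x\<in>D. wt 30 x = 10}" using alpha_pos[OF sd mw] .
  have a9: "card {x\<in>D. wt 30 x = 10} = 9 * \<beta>" using c1' spl g3 by linarith
  have b1: "1 \<le> \<beta>" using a9 pos by linarith
  have "54 * \<beta> \<le> 71253" using c2' g3 by linarith
  then have b2: "\<beta> \<le> 1319" by linarith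
  show ?thesis using a9 b1 b2 by blast
qed

end
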